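(* Let $\lambda>\sup_{x\in\{a=0\}}\hat\lambda(x)$ and let $f\in C^1(A)$ be a bounded function satisfying $a(x)f'+H(x,f)=\lambda$ in $A$. Extend $f$ to $\mathbb R$ by $f(x):=p^+_\lambda(x)$ for $x\in\{a=0\}$. Then $u(x):=\int_0^xf(z)\,dz$ is a Lipschitz viscosity supersolution of $a(x)u''+H(x,u')=\lambda$ in $\mathbb R$.
   Context: Deterministic setting: $a:\mathbb R\to[0,1]$ with $\sqrt a$ $\kappa$-Lipschitz and (A1$'$): $a\not\equiv0$ and every connected component of $A:=\{a>0\}$ is a bounded interval. $H:\mathbb R\times\mathbb R\to\mathbb R$ in $\mathscr H_{sqc}(\alpha_0,\alpha_1,\gamma,\eta)$, $\gamma>2$, $\eta>0$: (H1) $\alpha_0|p|^\gamma-1/\alpha_0\le H(x,p)\le\alpha_1(|p|^\gamma+1)$, (H2) $|H(x,p)-H(x,q)|\le\alpha_1(|p|+|q|+1)^{\gamma-1}|p-q|$, (H3) $|H(x,p)-H(y,p)|\le\alpha_1(|p|^\gamma+1)|x-y|$, $H(x,\cdot)$ strictly quasiconvex with unique minimizer $\hat p(x)$, $H(x,p_1)-H(x,p_2)\ge\eta|p_1-p_2|$ for $p_1<p_2\le\hat p(x)$, $H(x,p_2)-H(x,p_1)\ge\eta|p_1-p_2|$ for $p_2>p_1\ge\hat p(x)$. $\hat\lambda(x):=\min_pH(x,p)$; for $\lambda\ge\hat\lambda(x)$, $\{p:H(x,p)\le\lambda\}=[p^-_\lambda(x),p^+_\lambda(x)]$. A continuous $u$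 is a viscosity supersolution of $au''+H(x,u')=\lambda$ if $a(x_0)\varphi''(x_0)+H(x_0,\varphi'(x_0))\le\lambda$ whenever a $C^2$ $\varphi$ touches $u$ from below at $x_0$. *)

theory Defs
  imports "HOL-Analysis.Analysis"
begin

definition strictly_quasiconvex :: "(real \<Rightarrow> real) \<Rightarrow> bool" where
  "strictly_quasiconvex g \<longleftrightarrow>
     (\<forall>p q t. p \<noteq> q \<and> 0 < t \<and> t < 1 \<longrightarrow> g (t * p + (1 - t) * q) < max (g p) (g q))"

definition is_minimizer :: "(real \<Rightarrow> real) \<Rightarrow> real \<Rightarrow> bool" where
  "is_minimizer g p \<longleftrightarrow> (\<forall>q. g p \<le> g q)"

definition hat_p :: "(real \<Rightarrow> real \<Rightarrow> real) \<Rightarrow> real \<Rightarrow> real" where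
  "hat_p H x = (THE p. is_minimizer (H x) p)"

definition hat_lambda :: "(real \<Rightarrow> real \<Rightarrow> real) \<Rightarrow> real \<Rightarrow> real" where
  "hat_lambda H x = Inf (range (H x))"

definition p_plus :: "(real \<Rightarrow> real \<Rightarrow> real) \<Rightarrow> real \<Rightarrow> real \<Rightarrow> real" where
  "p_plus H lam x = Sup {p. H x p \<le> lam}"

definition H_sqc :: "real \<Rightarrow> real \<Rightarrow> real \<Rightarrow> real \<Rightarrow> (real \<Rightarrow> real \<Rightarrow> real) \<Rightarrow> bool" where
  "H_sqc \<alpha>0 \<alpha>1 \<gamma> \<eta> H \<longleftrightarrow>
     (\<forall>x p. \<alpha>0 * \<bar>p\<bar> powr \<gamma> - 1 / \<alpha>0 \<le> H x p \<and> H x p \<le> \<alpha>1 * (\<bar>p\<bar> powr \<gamma> + 1)) \<and>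
     (\<forall>x p q. \<bar>H x p - H x q\<bar> \<le> \<alpha>1 * (\<bar>p\<bar> + \<bar>q\<bar> + 1) powr (\<gamma> - 1) * \<bar>p - q\<bar>) \<and>
     (\<forall>x y p. \<bar>H x p - H y p\<bar> \<le> \<alpha>1 * (\<bar>p\<bar> powr \<gamma> + 1) * \<bar>x - y\<bar>) \<and>
     (\<forall>x. strictly_quasiconvex (H x)) \<and>
     (\<forall>x. \<exists>!p. is_minimizer (H x) p) \<and>
     (\<forall>x p1 p2. p1 < p2 \<and> p2 \<le> hat_p H x \<longrightarrow> H x p1 - H x p2 \<ge> \<eta> * \<bar>p1 - p2\<bar>) \<and>
     (\<forall>x p1 p2. p2 > p1 \<and> p1 \<ge> hat_p H x \<longrightarrow> H x p2 - H x p1 \<ge> \<eta> * \<bar>p1 - p2\<bar>)"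

definition C2_with :: "(real \<Rightarrow> real) \<Rightarrow> (real \<Rightarrow> real) \<Rightarrow> (real \<Rightarrow> real) \<Rightarrow> bool" where
  "C2_with \<phi> \<phi>' \<phi>'' \<longleftrightarrow>
     (\<forall>x. (\<phi> has_real_derivative \<phi>' x) (at x)) \<and>
     (\<forall>x. (\<phi>' has_real_derivative \<phi>'' x) (at x)) \<and>
     continuous_on UNIV \<phi>''"

definition visc_supersol ::
  "(real \<Rightarrow> real) \<Rightarrow> (real \<Rightarrow> real \<Rightarrow> real) \<Rightarrow> real \<Rightarrow> (real \<Rightarrow> real) \<Rightarrow> bool" where
  "visc_supersol a H lam u \<longleftrightarrow> continuous_on UNIV u \<and>
     (\<forall>\<phi> \<phi>' \<phi>'' x0. C2_with \<phi> \<phi>' \<phi>'' \<and> \<phi> x0 = u x0 \<and>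
        (\<exists>\<delta>>0. \<forall>y. \<bar>y - x0\<bar> < \<delta> \<longrightarrow> \<phi> y \<le> u y)
        \<longrightarrow> a x0 * \<phi>'' x0 + H x0 (\<phi>' x0) \<le> lam)"

definition prim0 :: "(real \<Rightarrow> real) \<Rightarrow> real \<Rightarrow> real" where
  "prim0 f x = (if 0 \<le> x then integral {0..x} f else - integral {x..0} f)"

end

theory Submission
  imports Defs
begin


lemma qc_lt:
  assumes "strictly_quasiconvex g" "p0 < q" "q < p"
  shows "g q < max (g p0) (g p)"
proof -
  define t where "t = (p - q) / (p - p0)"
  have t: "0 < t" "t < 1" using assms(2,3) by (auto simp: t_def field_simps)
  have nz: "p - p0 \<noteq> 0" using assms by simp
  have "t * p0 + (1 - t) * p = ((p - q) * p0 + (q - p0) * p) / (p - p0)"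
    using nz by (simp add: t_def divide_simps)
  also have "\<dots> = q * (p - p0) / (p - p0)" by (simp add: algebra_simps)
  also have "\<dots> = q" using nz by simp
  finally have e: "t * p0 + (1 - t) * p = q" .
  have "p0 \<noteq> p" using assms by simp
  then have "g (t * p0 + (1 - t) * p) < max (g p0) (g p)"
    using assms(1) t unfolding strictly_quasiconvex_def by blast
  then show ?thesis using e by simp
qed

lemma qc_gt:
  assumes "strictly_quasiconvex g" "p < q" "q < p0"
  shows "g q < max (g p0) (g p)"
  using qc_lt[OF assms] by (simp add: max.commute)

lemma open_leb: "open (S::real set) \<Longrightarrow> S \<in> sets lebesgue"
  by (simp add: borel_open)
lemma closed_leb: "closed (S::real set) \<Longrightarrow> S \<in> sets lebesgue"
  by (simp add: borel_closed)

lemma blowup: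
  fixes a f f' :: "real \<Rightarrow> real"
  assumes acont: "continuous_on UNIV a" and anonneg: "\<forall>z. a z \<ge> 0"
    and aquad: "\<forall>z w. a w = 0 \<longrightarrow> a z \<le> K^2 * (z - w)^2" and K: "K > 0"
    and ax0: "a x0 = 0" and xy: "x0 < y1" and ay1: "a y1 > 0"
    and der: "\<forall>z. x0 \<le> z \<and> z \<le> y1 \<and> a z > 0 \<longrightarrow>
       (f has_real_derivative f' z) (at z) \<and> \<bar>f z\<bar> \<le> B \<and> (f z > q \<longrightarrow> f' z \<le> - c / a z)"
    and c: "c > 0" and fy1: "f y1 > q"
  shows False
proof -
  define T where "T = {t \<in> {x0..y1}. a t = 0}"
  have clT: "closed T" unfolding T_def
    by (rule continuous_closed_preimage_constant) (auto intro: continuous_on_subset[OF acont])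
  have "x0 \<in> T" using ax0 xy by (auto simp: T_def)
  moreover have bT: "bdd_above T" by (auto simp: T_def bdd_above_def)
  ultimately have lT: "Sup T \<in> T" using clT closed_contains_Sup by blast
  define l where "l = Sup T"
  have al: "a l = 0" and xl: "x0 \<le> l" "l \<le> y1" using lT by (auto simp: l_def T_def)
  have ly: "l < y1" using al ay1 xl by (metis less_irrefl order_le_less)
  have apos: "a z > 0" if "l < z" "z \<le> y1" for z
  proof (rule ccontr)
    assume "\<not> a z > 0"
    have "a z \<ge> 0" using anonneg by simp
    then have "a z = 0" using \<open>\<not> a z > 0\<close> by simp
    then have "z \<in> T" using that xl by (auto simp: T_def)
    then have "z \<le> l" unfolding l_def using bT by (rule cSup_upper)
    then show False using that by simp
  qed
  have D: "(f has_real_derivative f' z) (at z)" "\<bar>f z\<bar> \<le> B" "f z > q \<Longrightarrow> f' z \<le> - c / a z"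
    if "l < z" "z \<le> y1" for z
    using der apos[OF that] that xl by auto
  have fq: "f z > q" if z: "l < z" "z \<le> y1" for z
  proof (rule ccontr)
    assume nz: "\<not> f z > q"
    then have zy: "z < y1" using fy1 z by (cases "z = y1") auto
    define S where "S = {t \<in> {z..y1}. f t \<in> {..q}}"
    have fc: "continuous_on {z..y1} f"
    proof (rule continuous_at_imp_continuous_on, intro ballI)
      fix x assume "x \<in> {z..y1}" then have "l < x" "x \<le> y1" using z by auto
      then show "isCont f x" using D(1) DERIV_isCont by blast
    qed
    have clS: "closed S" unfolding S_def
      using continuous_closed_preimage[OF fc closed_atLeastAtMost closed_atMost]
      by (simp add: vimage_def Int_def)
    have "z \<in> S" using nz zy by (auto simp: S_def)
    moreover have bS: "bdd_above S" by (auto simp: S_def bdd_above_def)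
    ultimately have sS: "Sup S \<in> S" using clS closed_contains_Sup by blast
    define s where "s = Sup S"
    have s: "z \<le> s" "s \<le> y1" "f s \<le> q" using sS by (auto simp: s_def S_def)
    have sy: "s < y1" using s fy1 by (metis not_less order_le_less)
    have dd: "\<And>x. s \<le> x \<Longrightarrow> x \<le> y1 \<Longrightarrow> (f has_real_derivative f' x) (at x)"
      using D(1) s z by auto
    obtain \<xi> where \<xi>: "s < \<xi>" "\<xi> < y1" "f y1 - f s = (y1 - s) * f' \<xi>"
      using MVT2[OF sy dd] by blast
    have "\<xi> \<notin> S" using \<xi>(1) cSup_upper[OF _ bS] unfolding s_def by force
    then have "f \<xi> > q" using \<xi> s by (auto simp: S_def)
    then have "f' \<xi> \<le> - c / a \<xi>" using D \<xi> s z by auto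
    moreover have "a \<xi> > 0" using apos \<xi> s z by auto
    moreover have "c / a \<xi> > 0" using c \<open>a \<xi> > 0\<close> by simp
    ultimately have "f' \<xi> < 0" by linarith
    then have "(y1 - s) * f' \<xi> < 0" using sy by (simp add: mult_pos_neg)
    then have "f y1 < f s" using \<xi> by linarith
    then show False using s fy1 by simp
  qed
  define C where "C = c / K^2"
  have C: "C > 0" using c K by (simp add: C_def)
  define w where "w z = f z - C / (z - l)" for z
  have wd: "(w has_real_derivative (f' z + C / (z - l)^2)) (at z)" if "l < z" "z \<le> y1" for z
  proof -
    have "((\<lambda>z. C / (z - l)) has_real_derivative (- C / (z - l)^2)) (at z)"
      using that by (auto intro!: derivative_eq_intros simp: power2_eq_square field_simps)
    from DERIV_diff[OF D(1)[OF that] this] show ?thesis unfolding w_def by simp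
  qed
  have wneg: "f' z + C / (z - l)^2 \<le> 0" if "l < z" "z \<le> y1" for z
  proof -
    have az: "0 < a z" "a z \<le> K^2 * (z - l)^2" using apos[OF that] aquad al by auto
    have "f' z \<le> - c / a z" using D(3)[OF that fq[OF that]] .
    moreover have "c / (K^2 * (z - l)^2) \<le> c / a z"
      using az c by (intro divide_left_mono) auto
    moreover have "C / (z - l)^2 = c / (K^2 * (z - l)^2)" by (simp add: C_def)
    ultimately show ?thesis by linarith
  qed
  have wmono: "w y1 \<le> w z" if zz: "l < z" "z \<le> y1" for z
  proof (rule DERIV_nonpos_imp_nonincreasing[of z y1 w])
    show "z \<le> y1" using zz by simp
    fix x assume "z \<le> x" "x \<le> y1"
    then have "l < x" "x \<le> y1" using zz by auto
    then show "\<exists>y. (w has_real_derivative y) (at x) \<and> y \<le> 0" using wd wneg by blast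
  qed
  define d where "d = min ((y1 - l) / 2) (C / (B + \<bar>w y1\<bar> + 1))"
  have Bnn: "B \<ge> 0" using D(2)[OF ly order_refl] by simp
  have d: "0 < d" "d \<le> (y1 - l) / 2" "d \<le> C / (B + \<bar>w y1\<bar> + 1)"
  proof -
    have "C / (B + \<bar>w y1\<bar> + 1) > 0" using C Bnn by simp
    then show "0 < d" unfolding d_def using ly by auto
    show "d \<le> (y1 - l) / 2" unfolding d_def by (rule min.cobounded1)
    show "d \<le> C / (B + \<bar>w y1\<bar> + 1)" unfolding d_def by (rule min.cobounded2)
  qed
  have z: "l < l + d" "l + d \<le> y1" using d ly by auto
  have M: "B + \<bar>w y1\<bar> + 1 > 0" using Bnn by simp
  have "d * (B + \<bar>w y1\<bar> + 1) \<le> C" using d(3) M by (simp add: le_divide_eq)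
  then have "C / d \<ge> B + \<bar>w y1\<bar> + 1" using d(1) by (simp add: pos_le_divide_eq mult.commute)
  then have "f (l + d) \<ge> w y1 + B + \<bar>w y1\<bar> + 1" using wmono[OF z] by (simp add: w_def)
  then show False using D(2)[OF z] by linarith
qed



lemma Hx_lip: "H_sqc \<alpha>0 \<alpha>1 \<gamma> \<eta> H \<Longrightarrow> \<bar>H x p - H y p\<bar> \<le> \<alpha>1 * (\<bar>p\<bar> powr \<gamma> + 1) * \<bar>x - y\<bar>"
  unfolding H_sqc_def by blast

lemma near_lt:
  assumes "H_sqc \<alpha>0 \<alpha>1 \<gamma> \<eta> H" "H x0 p < c"
  shows "\<exists>\<delta>>0. \<forall>y. \<bar>y - x0\<bar> < \<delta> \<longrightarrow> H y p < c"
proof -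
  define N where "N = \<bar>\<alpha>1 * (\<bar>p\<bar> powr \<gamma> + 1)\<bar> + 1"
  have N: "N > 0" by (simp add: N_def)
  define \<delta> where "\<delta> = (c - H x0 p) / N"
  have "\<delta> > 0" using N assms(2) by (simp add: \<delta>_def)
  moreover have "H y p < c" if "\<bar>y - x0\<bar> < \<delta>" for y
  proof -
    have "\<bar>H y p - H x0 p\<bar> \<le> \<alpha>1 * (\<bar>p\<bar> powr \<gamma> + 1) * \<bar>y - x0\<bar>" using Hx_lip[OF assms(1)] .
    also have "\<dots> \<le> N * \<bar>y - x0\<bar>" unfolding N_def
      by (intro mult_right_mono) auto
    also have "\<dots> < N * \<delta>" using that N by simp
    also have "\<dots> = c - H x0 p" using N by (simp add: \<delta>_def)
    finally show ?thesis by linarith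
  qed
  ultimately show ?thesis by blast
qed

lemma near_gt:
  assumes "H_sqc \<alpha>0 \<alpha>1 \<gamma> \<eta> H" "H x0 p > c"
  shows "\<exists>\<delta>>0. \<forall>y. \<bar>y - x0\<bar> < \<delta> \<longrightarrow> H y p > c"
proof -
  define N where "N = \<bar>\<alpha>1 * (\<bar>p\<bar> powr \<gamma> + 1)\<bar> + 1"
  have N: "N > 0" by (simp add: N_def)
  define \<delta> where "\<delta> = (H x0 p - c) / N"
  have "\<delta> > 0" using N assms(2) by (simp add: \<delta>_def)
  moreover have "H y p > c" if "\<bar>y - x0\<bar> < \<delta>" for y
  proof -
    have "\<bar>H y p - H x0 p\<bar> \<le> \<alpha>1 * (\<bar>p\<bar> powr \<gamma> + 1) * \<bar>y - x0\<bar>" using Hx_lip[OF assms(1)] .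
    also have "\<dots> \<le> N * \<bar>y - x0\<bar>" unfolding N_def
      by (intro mult_right_mono) auto
    also have "\<dots> < N * \<delta>" using that N by simp
    also have "\<dots> = H x0 p - c" using N by (simp add: \<delta>_def)
    finally show ?thesis by linarith
  qed
  ultimately show ?thesis by blast
qed

lemma Hp_cont:
  assumes "H_sqc \<alpha>0 \<alpha>1 \<gamma> \<eta> H" "\<gamma> \<ge> 1" "\<epsilon> > 0"
  shows "\<exists>\<theta>>0. \<forall>q. \<bar>q - P\<bar> < \<theta> \<longrightarrow> \<bar>H x q - H x P\<bar> < \<epsilon>"
proof -
  define M where "M = \<bar>\<alpha>1\<bar> * (2 * \<bar>P\<bar> + 2) powr (\<gamma> - 1) + 1"
  have "0 \<le> \<bar>\<alpha>1\<bar> * (2 * \<bar>P\<bar> + 2) powr (\<gamma> - 1)" by simp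
  then have M: "M > 0" unfolding M_def by linarith
  define \<theta> where "\<theta> = min 1 (\<epsilon> / M)"
  have \<theta>: "\<theta> > 0" "\<theta> \<le> 1" "\<theta> \<le> \<epsilon> / M" using M assms(3) by (auto simp: \<theta>_def)
  have "\<bar>H x q - H x P\<bar> < \<epsilon>" if q: "\<bar>q - P\<bar> < \<theta>" for q
  proof -
    have h2: "\<bar>H x q - H x P\<bar> \<le> \<alpha>1 * (\<bar>q\<bar> + \<bar>P\<bar> + 1) powr (\<gamma> - 1) * \<bar>q - P\<bar>"
      using assms(1) unfolding H_sqc_def by blast
    have "\<bar>q\<bar> + \<bar>P\<bar> + 1 \<le> 2 * \<bar>P\<bar> + 2" using q \<theta> by linarith
    then have "(\<bar>q\<bar> + \<bar>P\<bar> + 1) powr (\<gamma> - 1) \<le> (2 * \<bar>P\<bar> + 2) powr (\<gamma> - 1)"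
      using assms(2) by (intro powr_mono2) auto
    then have "\<alpha>1 * (\<bar>q\<bar> + \<bar>P\<bar> + 1) powr (\<gamma> - 1) \<le> M"
      unfolding M_def
      by (smt (verit, best) abs_ge_self mult_left_mono abs_ge_zero powr_ge_zero mult_right_mono)
    then have "\<alpha>1 * (\<bar>q\<bar> + \<bar>P\<bar> + 1) powr (\<gamma> - 1) * \<bar>q - P\<bar> \<le> M * \<bar>q - P\<bar>"
      by (intro mult_right_mono) auto
    also have "\<dots> < M * \<theta>" using q M by simp
    also have "\<dots> \<le> \<epsilon>" using \<theta>(3) M by (simp add: le_divide_eq mult.commute)
    finally show ?thesis using h2 by linarith
  qed
  then show ?thesis using \<theta>(1) by blast
qed

lemma growth:
  assumes "H_sqc \<alpha>0 \<alpha>1 \<gamma> \<eta> H" "\<alpha>0 > 0" "\<gamma> \<ge> 1" "H x p \<le> lam"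
  shows "\<bar>p\<bar> \<le> max 1 ((lam + 1 / \<alpha>0) / \<alpha>0)"
proof (cases "\<bar>p\<bar> \<le> 1")
  case True then show ?thesis by simp
next
  case False
  have "\<alpha>0 * \<bar>p\<bar> powr \<gamma> - 1 / \<alpha>0 \<le> H x p" using assms(1) unfolding H_sqc_def by blast
  then have a: "\<alpha>0 * \<bar>p\<bar> powr \<gamma> \<le> lam + 1 / \<alpha>0" using assms(4) by linarith
  have "\<bar>p\<bar> powr 1 \<le> \<bar>p\<bar> powr \<gamma>" using False assms(3) by (intro powr_mono) auto
  then have "\<bar>p\<bar> \<le> \<bar>p\<bar> powr \<gamma>" using False by simp
  then have "\<alpha>0 * \<bar>p\<bar> \<le> lam + 1 / \<alpha>0" using a assms(2)
    by (smt (verit) mult_left_mono)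
  then have "\<bar>p\<bar> \<le> (lam + 1 / \<alpha>0) / \<alpha>0" using assms(2) by (simp add: le_divide_eq mult.commute)
  then show ?thesis by simp
qed

lemma sup_le:
  assumes "strictly_quasiconvex (H y)" "H y p0 < lam" "p0 < q" "H y q > lam"
  shows "p_plus H lam y \<le> q"
  unfolding p_plus_def
proof (rule cSup_least)
  show "{p. H y p \<le> lam} \<noteq> {}" using assms(2) by (auto intro!: exI[of _ p0])
  fix p assume p: "p \<in> {p. H y p \<le> lam}"
  show "p \<le> q"
  proof (rule ccontr)
    assume "\<not> p \<le> q"
    then have "H y q < max (H y p0) (H y p)" using qc_lt[OF assms(1) assms(3)] by simp
    then show False using p assms by auto
  qed
qed

lemma sup_ge:
  assumes "bdd_above {p. H y p \<le> lam}" "H y p1 \<le> lam"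
  shows "p1 \<le> p_plus H lam y"
  unfolding p_plus_def using assms by (auto intro: cSup_upper)


lemma pplus_cont:
  assumes Hc: "H_sqc \<alpha>0 \<alpha>1 \<gamma> \<eta> H" and bdd: "\<forall>y. bdd_above {p. H y p \<le> lam}"
    and p0: "H x0 p0 < lam" and e: "e > 0"
  shows "\<exists>d>0. \<forall>y. \<bar>y - x0\<bar> < d \<longrightarrow> \<bar>p_plus H lam y - p_plus H lam x0\<bar> < e"
proof -
  have qc: "\<And>y. strictly_quasiconvex (H y)" using Hc unfolding H_sqc_def by blast
  define P where "P = p_plus H lam x0"
  have p0P: "p0 \<le> P" unfolding P_def using bdd p0 by (intro sup_ge) auto
  define q where "q = P + e / 2"
  have Hq: "H x0 q > lam"
  proof (rule ccontr)
    assume "\<not> H x0 q > lam"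
    then have "q \<le> P" unfolding P_def using bdd by (intro sup_ge) auto
    then show False using e by (simp add: q_def)
  qed
  obtain d1 where d1: "d1 > 0" "\<forall>y. \<bar>y - x0\<bar> < d1 \<longrightarrow> H y q > lam" using near_gt[OF Hc Hq] by blast
  obtain d2 where d2: "d2 > 0" "\<forall>y. \<bar>y - x0\<bar> < d2 \<longrightarrow> H y p0 < lam" using near_lt[OF Hc p0] by blast
  obtain p where p: "H x0 p \<le> lam" "P - e / 2 < p"
  proof -
    have "{p. H x0 p \<le> lam} \<noteq> {}" using p0 by (auto intro!: exI[of _ p0])
    from less_cSupD[OF this, of "P - e/2"] e show ?thesis
      using that unfolding P_def p_plus_def by auto
  qed
  obtain p1 where p1: "H x0 p1 < lam" "P - e < p1"
  proof (cases "p0 < p")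
    case True
    define mm where "mm = min (e / 4) ((p - p0) / 2)"
    define p1 where "p1 = p - mm"
    have m1: "mm > 0" using True e by (simp add: mm_def)
    have m2: "mm \<le> (p - p0) / 2" unfolding mm_def by (rule min.cobounded2)
    have m3: "mm \<le> e / 4" unfolding mm_def by (rule min.cobounded1)
    note m = m1 m2 m3
    have "2 * mm \<le> p - p0" using m2 by simp
    then have "p0 < p1" unfolding p1_def using m True by linarith
    moreover have "p1 < p" unfolding p1_def using m by linarith
    ultimately have "H x0 p1 < max (H x0 p0) (H x0 p)" by (rule qc_lt[OF qc])
    then have "H x0 p1 < lam" using p0 p by linarith
    moreover have "P - e < p1" using p e m(3) unfolding p1_def by linarith
    ultimately show ?thesis using that by blast
  next
    case False
    then show ?thesis using that[of p0] p0 p e by auto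
  qed
  obtain d3 where d3: "d3 > 0" "\<forall>y. \<bar>y - x0\<bar> < d3 \<longrightarrow> H y p1 < lam" using near_lt[OF Hc p1(1)] by blast
  define d where "d = min d1 (min d2 d3)"
  have "d > 0" using d1 d2 d3 by (simp add: d_def)
  moreover have "\<bar>p_plus H lam y - P\<bar> < e" if y: "\<bar>y - x0\<bar> < d" for y
  proof -
    have "p_plus H lam y \<le> q"
      by (rule sup_le[OF qc]) (use d2 d1 y p0P e in \<open>auto simp: d_def q_def\<close>)
    moreover have "p1 \<le> p_plus H lam y"
      by (rule sup_ge) (use bdd d3 y in \<open>auto simp: d_def\<close>)
    ultimately show ?thesis using p1 e by (auto simp: q_def)
  qed
  ultimately show ?thesis unfolding P_def by blast
qed


theorem mainTheorem15:
  fixes a :: "real \<Rightarrow> real" and H :: "real \<Rightarrow> real \<Rightarrow> real"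
    and f f' :: "real \<Rightarrow> real"
    and \<kappa> \<alpha>0 \<alpha>1 \<gamma> \<eta> lam :: real
  assumes a_range: "\<forall>x. 0 \<le> a x \<and> a x \<le> 1"
    and a_lip: "\<kappa>-lipschitz_on UNIV (\<lambda>x. sqrt (a x))"
    and a_nonzero: "\<exists>x. a x \<noteq> 0"
    and A_comp: "\<forall>x\<in>{x. a x > 0}. is_interval (connected_component_set {x. a x > 0} x)
                     \<and> bounded (connected_component_set {x. a x > 0} x)"
    and params: "0 < \<alpha>0" "0 < \<alpha>1" "\<gamma> > 2" "\<eta> > 0"
    and H_class: "H_sqc \<alpha>0 \<alpha>1 \<gamma> \<eta> H"
    and lam_gt: "lam > Sup (hat_lambda H ` {x. a x = 0})"
    and f_deriv: "\<forall>x\<in>{x. a x > 0}. (f has_real_derivative f' x) (at x)"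
    and f'_cont: "continuous_on {x. a x > 0} f'"
    and f_bdd: "bounded (f ` {x. a x > 0})"
    and f_eq: "\<forall>x\<in>{x. a x > 0}. a x * f' x + H x (f x) = lam"
    and f_ext: "\<forall>x. a x = 0 \<longrightarrow> f x = p_plus H lam x"
  shows "(\<exists>L. L-lipschitz_on UNIV (prim0 f)) \<and> visc_supersol a H lam (prim0 f)"
proof -
  have qc: "\<And>y. strictly_quasiconvex (H y)" using H_class unfolding H_sqc_def by blast
  have g1: "\<gamma> \<ge> 1" using params by simp
  have anonneg: "\<forall>z. a z \<ge> 0" using a_range by blast
  have kappa: "\<kappa> \<ge> 0" using a_lip by (simp add: lipschitz_on_def)
  have sc: "continuous_on UNIV (\<lambda>x. sqrt (a x))" using lipschitz_on_continuous_on[OF a_lip] .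
  have "continuous_on UNIV (\<lambda>x. (sqrt (a x))^2)" by (intro continuous_intros sc)
  moreover have "(\<lambda>x. (sqrt (a x))^2) = a" using anonneg by (auto simp: fun_eq_iff)
  ultimately have acont: "continuous_on UNIV a" by metis
  define K where "K = \<kappa> + 1"
  have K: "K > 0" using kappa by (simp add: K_def)
  have aquad: "\<forall>z w. a w = 0 \<longrightarrow> a z \<le> K^2 * (z - w)^2"
  proof (intro allI impI)
    fix z w assume aw: "a w = 0"
    have "dist (sqrt (a z)) (sqrt (a w)) \<le> \<kappa> * dist z w" using a_lip by (simp add: lipschitz_on_def)
    then have s: "sqrt (a z) \<le> \<kappa> * \<bar>z - w\<bar>" using aw by (simp add: dist_real_def)
    have "a z = (sqrt (a z))^2" using anonneg by simp
    also have "\<dots> \<le> (\<kappa> * \<bar>z - w\<bar>)^2" using s anonneg by (intro power_mono) auto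
    also have "\<dots> \<le> (K * \<bar>z - w\<bar>)^2" using kappa by (intro power_mono mult_right_mono) (auto simp: K_def)
    also have "\<dots> = K^2 * (z - w)^2" by (simp add: power_mult_distrib)
    finally show "a z \<le> K^2 * (z - w)^2" .
  qed
  define Z where "Z = {x. a x = 0}"
  define Ap where "Ap = {x. a x > 0}"
  have ZA: "x \<in> Z \<or> x \<in> Ap" for x using anonneg by (auto simp: Z_def Ap_def order_le_less)
  have ZA2: "x \<in> Z \<Longrightarrow> x \<notin> Ap" for x by (auto simp: Z_def Ap_def)
  have openA: "open Ap"
  proof -
    have "open (a -` {0<..})" using acont by (intro open_vimage) (auto simp: open_greaterThan)
    then show ?thesis by (simp add: vimage_def Ap_def)
  qed
  have closedZ: "closed Z" unfolding Z_def
    using continuous_closed_preimage_constant[OF acont closed_UNIV] by simp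
  have Hlow: "\<forall>x p. \<alpha>0 * \<bar>p\<bar> powr \<gamma> - 1 / \<alpha>0 \<le> H x p \<and> H x p \<le> \<alpha>1 * (\<bar>p\<bar> powr \<gamma> + 1)"
    using H_class unfolding H_sqc_def by blast
  have bdd_range: "bdd_below (range (H y))" for y
  proof -
    have "\<forall>p. - 1 / \<alpha>0 \<le> H y p"
    proof
      fix p have "0 \<le> \<alpha>0 * \<bar>p\<bar> powr \<gamma>" using params by simp
      then show "- 1 / \<alpha>0 \<le> H y p" using Hlow by (smt (verit) minus_divide_left)
    qed
    then show ?thesis by (auto intro: bdd_belowI2)
  qed
  have hl_le: "hat_lambda H y \<le> \<alpha>1" for y
  proof -
    have "hat_lambda H y \<le> H y 0" unfolding hat_lambda_def by (rule cInf_lower) (auto intro: bdd_range)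
    also have "\<dots> \<le> \<alpha>1 * (\<bar>0::real\<bar> powr \<gamma> + 1)" using Hlow by blast
    also have "\<dots> = \<alpha>1" by simp
    finally show ?thesis .
  qed
  have hatlt: "hat_lambda H y < lam" if "y \<in> Z" for y
  proof -
    have "bdd_above (hat_lambda H ` {x. a x = 0})" using hl_le by (intro bdd_aboveI[where M = \<alpha>1]) auto
    then have "hat_lambda H y \<le> Sup (hat_lambda H ` {x. a x = 0})"
      using that by (intro cSup_upper) (auto simp: Z_def)
    then show ?thesis using lam_gt by linarith
  qed
  have exlt: "\<exists>p. H y p < lam" if "y \<in> Z" for y
  proof -
    have "Inf (range (H y)) < lam" using hatlt[OF that] by (simp add: hat_lambda_def)
    then show ?thesis using cInf_lessD[of "range (H y)" lam] by auto
  qed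
  define R where "R = max 1 ((lam + 1 / \<alpha>0) / \<alpha>0)"
  have gr: "H y p \<le> lam \<Longrightarrow> \<bar>p\<bar> \<le> R" for y p
    unfolding R_def using growth[OF H_class params(1) g1] by blast
  have bdd: "\<forall>y. bdd_above {p. H y p \<le> lam}"
  proof
    fix y show "bdd_above {p. H y p \<le> lam}" using gr by (intro bdd_aboveI[where M = R]) (auto simp: abs_le_iff)
  qed
  have pZ: "\<bar>p_plus H lam y\<bar> \<le> R" if yZ: "y \<in> Z" for y
  proof -
    obtain p where p: "H y p < lam" using exlt[OF yZ] by blast
    have ne: "{p. H y p \<le> lam} \<noteq> {}" using p by (auto intro!: exI[of _ p])
    have "p_plus H lam y \<le> R" unfolding p_plus_def
      by (rule cSup_least[OF ne]) (use gr in \<open>auto simp: abs_le_iff\<close>)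
    moreover have "p \<le> p_plus H lam y" using bdd p by (intro sup_ge) auto
    moreover have "- R \<le> p" using gr[of y p] p by (auto simp: abs_le_iff)
    ultimately show ?thesis by auto
  qed
  obtain B0 where B0: "\<forall>x\<in>Ap. \<bar>f x\<bar> \<le> B0" using f_bdd unfolding bounded_iff Ap_def by auto
  define B where "B = max B0 R"
  have fB: "\<bar>f x\<bar> \<le> B" for x
  proof (cases "x \<in> Z")
    case True
    then have "\<bar>f x\<bar> \<le> R" using pZ f_ext by (auto simp: Z_def)
    then show ?thesis by (simp add: B_def)
  next
    case False then show ?thesis using ZA B0 by (force simp: B_def)
  qed
  have Bnn: "B \<ge> 0" unfolding B_def R_def by simp
  have fcA: "continuous_on Ap f"
    by (rule continuous_at_imp_continuous_on) (use f_deriv in \<open>auto simp: Ap_def intro: DERIV_isCont\<close>)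
  have fcZ: "continuous_on Z f"
  proof -
    have "continuous_on Z (p_plus H lam)" unfolding continuous_on_iff
    proof (intro ballI allI impI)
      fix x0 e :: real assume x0: "x0 \<in> Z" and e: "e > 0"
      obtain p0 where p0: "H x0 p0 < lam" using exlt[OF x0] by blast
      obtain d where "d > 0" "\<forall>y. \<bar>y - x0\<bar> < d \<longrightarrow> \<bar>p_plus H lam y - p_plus H lam x0\<bar> < e"
        using pplus_cont[OF H_class bdd p0 e] by blast
      then show "\<exists>d>0. \<forall>x'\<in>Z. dist x' x0 < d \<longrightarrow> dist (p_plus H lam x') (p_plus H lam x0) < e"
        by (auto simp: dist_real_def)
    qed
    moreover have "\<And>x. x \<in> Z \<Longrightarrow> f x = p_plus H lam x" using f_ext by (auto simp: Z_def)
    ultimately show ?thesis using continuous_on_cong by blast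
  qed
  have mA: "(\<lambda>x. if x \<in> Ap then f x else 0) \<in> borel_measurable lebesgue"
    using borel_measurable_if[OF open_leb[OF openA]]
      continuous_imp_measurable_on_sets_lebesgue[OF fcA open_leb[OF openA]] by blast
  have mZ: "(\<lambda>x. if x \<in> Z then f x else 0) \<in> borel_measurable lebesgue"
    using borel_measurable_if[OF closed_leb[OF closedZ]]
      continuous_imp_measurable_on_sets_lebesgue[OF fcZ closed_leb[OF closedZ]] by blast
  have "f = (\<lambda>x. (if x \<in> Ap then f x else 0) + (if x \<in> Z then f x else 0))"
    using ZA ZA2 by (force simp: fun_eq_iff)
  then have fm: "f \<in> borel_measurable lebesgue" using borel_measurable_add[OF mA mZ] by metis
  have intg: "f integrable_on {s..t}" for s t
  proof (rule measurable_bounded_by_integrable_imp_integrable[where g = "\<lambda>_. B"])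
    show "f \<in> borel_measurable (lebesgue_on {s..t})" using fm by (rule measurable_restrict_space1)
    show "(\<lambda>_. B) integrable_on {s..t}" by auto
    show "\<And>x. x \<in> {s..t} \<Longrightarrow> norm (f x) \<le> B" using fB by simp
    show "{s..t} \<in> sets lebesgue" by simp
  qed
  have pdiff: "prim0 f t - prim0 f s = integral {s..t} f" if st: "s \<le> t" for s t
  proof -
    consider "0 \<le> s" | "s \<le> 0" "0 \<le> t" | "t \<le> 0" using st by linarith
    then show ?thesis
    proof cases
      case 1
      then show ?thesis using Henstock_Kurzweil_Integration.integral_combine[of 0 s t f] intg st by (simp add: prim0_def)
    next
      case 2
      then show ?thesis using Henstock_Kurzweil_Integration.integral_combine[of s 0 t f] intg st by (simp add: prim0_def)
    next
      case 3
      then show ?thesis using Henstock_Kurzweil_Integration.integral_combine[of s t 0 f] intg st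
        by (cases "t = 0") (auto simp: prim0_def)
    qed
  qed
  have ibound: "\<bar>integral {s..t} f\<bar> \<le> B * (t - s)" if st: "s \<le> t" for s t
  proof -
    have "integral {s..t} f \<le> integral {s..t} (\<lambda>_. B)"
      using intg fB by (intro integral_le) (auto simp: abs_le_iff)
    moreover have "integral {s..t} (\<lambda>_. - B) \<le> integral {s..t} f"
      using intg fB by (intro integral_le) (auto simp: abs_le_iff minus_le_iff)
    ultimately show ?thesis using st by (auto simp: abs_le_iff mult.commute)
  qed
  have lip: "B-lipschitz_on UNIV (prim0 f)"
    unfolding lipschitz_on_def
  proof (intro conjI Bnn ballI)
    fix x y :: real
    show "dist (prim0 f x) (prim0 f y) \<le> B * dist x y"
    proof (cases "x \<le> y")
      case True then show ?thesis using pdiff[OF True] ibound[OF True]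
        by (simp add: dist_real_def abs_minus_commute)
    next
      case False then have yx: "y \<le> x" by simp
      then show ?thesis using pdiff[OF yx] ibound[OF yx]
        by (simp add: dist_real_def)
    qed
  qed
  have ucont: "continuous_on UNIV (prim0 f)" using lipschitz_on_continuous_on[OF lip] .
  define u where "u = prim0 f"
  have upper: "\<exists>\<delta>>0. \<forall>y. x0 \<le> y \<and> y < x0 + \<delta> \<longrightarrow> f y \<le> q"
    if x0: "a x0 = 0" and p0: "H x0 p0 < lam" and pq: "p0 < q" and Hq: "H x0 q > lam" for x0 p0 q
  proof -
    define c where "c = (H x0 q - lam) / 2"
    have c: "c > 0" using Hq by (simp add: c_def)
    have Hq': "H x0 q > lam + c" using Hq by (simp add: c_def field_simps)
    obtain d1 where d1: "d1 > 0" "\<forall>y. \<bar>y - x0\<bar> < d1 \<longrightarrow> H y q > lam + c"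
      using near_gt[OF H_class Hq'] by blast
    obtain d2 where d2: "d2 > 0" "\<forall>y. \<bar>y - x0\<bar> < d2 \<longrightarrow> H y p0 < lam"
      using near_lt[OF H_class p0] by blast
    define \<delta> where "\<delta> = min d1 d2"
    have \<delta>: "\<delta> > 0" using d1 d2 by (simp add: \<delta>_def)
    have near: "H y q > lam + c" "H y p0 < lam" if "\<bar>y - x0\<bar> < \<delta>" for y
      using that d1 d2 by (auto simp: \<delta>_def)
    have "f y \<le> q" if y: "x0 \<le> y" "y < x0 + \<delta>" for y
    proof (cases "a y = 0")
      case True
      have yn: "\<bar>y - x0\<bar> < \<delta>" using y by auto
      have "p_plus H lam y \<le> q"
        by (rule sup_le[OF qc]) (use near[OF yn] pq c in auto)
      then show ?thesis using f_ext True by simp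
    next
      case False
      then have ay: "a y > 0" using anonneg by (metis order_le_less)
      show ?thesis
      proof (rule ccontr)
        assume "\<not> f y \<le> q"
        then have fy: "f y > q" by simp
        have xy: "x0 < y" using y ay x0 by (cases "x0 = y") auto
        have der: "\<forall>z. x0 \<le> z \<and> z \<le> y \<and> 0 < a z \<longrightarrow>
              (f has_real_derivative f' z) (at z) \<and> \<bar>f z\<bar> \<le> B \<and> (q < f z \<longrightarrow> f' z \<le> - c / a z)"
          proof (intro allI impI conjI)
            fix z assume z: "x0 \<le> z \<and> z \<le> y \<and> 0 < a z"
            show "(f has_real_derivative f' z) (at z)" using f_deriv z by auto
            show "\<bar>f z\<bar> \<le> B" using fB .
            assume fz: "q < f z"
            have zn: "\<bar>z - x0\<bar> < \<delta>" using z y by auto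
            have "H z q < max (H z p0) (H z (f z))" using qc_lt[OF qc pq fz] .
            then have "H z (f z) > lam + c" using near[OF zn] c by (smt (verit))
            moreover have "a z * f' z + H z (f z) = lam" using f_eq z by auto
            ultimately have "f' z * a z \<le> - c" by (simp add: algebra_simps)
            then have "f' z \<le> (- c) / a z" using z by (subst pos_le_divide_eq) auto
            then show "f' z \<le> - c / a z" by simp
          qed
        show False using blowup[OF acont anonneg aquad K x0 xy ay der c fy] .
      qed
    qed
    then show ?thesis using \<delta> by blast
  qed
  have lower: "\<exists>\<delta>>0. \<forall>y. x0 - \<delta> < y \<and> y \<le> x0 \<longrightarrow> q \<le> f y"
    if x0: "a x0 = 0" and p0: "H x0 p0 < lam" and pq: "q < p0" and Hq: "H x0 q > lam" for x0 p0 q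
  proof -
    define c where "c = (H x0 q - lam) / 2"
    have c: "c > 0" using Hq by (simp add: c_def)
    have Hq': "H x0 q > lam + c" using Hq by (simp add: c_def field_simps)
    obtain d1 where d1: "d1 > 0" "\<forall>y. \<bar>y - x0\<bar> < d1 \<longrightarrow> H y q > lam + c"
      using near_gt[OF H_class Hq'] by blast
    obtain d2 where d2: "d2 > 0" "\<forall>y. \<bar>y - x0\<bar> < d2 \<longrightarrow> H y p0 < lam"
      using near_lt[OF H_class p0] by blast
    define \<delta> where "\<delta> = min d1 d2"
    have \<delta>: "\<delta> > 0" using d1 d2 by (simp add: \<delta>_def)
    have near: "H y q > lam + c" "H y p0 < lam" if "\<bar>y - x0\<bar> < \<delta>" for y
      using that d1 d2 by (auto simp: \<delta>_def)
    define ar where "ar = (\<lambda>z. a (- z))"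
    define fr where "fr = (\<lambda>z. - f (- z))"
    define fr' where "fr' = (\<lambda>z. f' (- z))"
    have arc: "continuous_on UNIV ar" unfolding ar_def
      by (rule continuous_on_compose2[OF acont]) (auto intro: continuous_intros)
    have arn: "\<forall>z. ar z \<ge> 0" using anonneg by (simp add: ar_def)
    have arq: "\<forall>z w. ar w = 0 \<longrightarrow> ar z \<le> K^2 * (z - w)^2"
    proof (intro allI impI)
      fix z w assume "ar w = 0"
      then have "a (- w) = 0" by (simp add: ar_def)
      then have "a (- z) \<le> K^2 * (- z - - w)^2" using aquad by blast
      also have "(- z - - w)^2 = (z - w)^2" by (simp add: power2_eq_square algebra_simps)
      finally show "ar z \<le> K^2 * (z - w)^2" by (simp add: ar_def)
    qed
    have "q \<le> f y" if y: "x0 - \<delta> < y" "y \<le> x0" for y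
    proof (cases "a y = 0")
      case True
      have yn: "\<bar>y - x0\<bar> < \<delta>" using y by auto
      have "p0 \<le> p_plus H lam y"
        by (rule sup_ge) (use bdd near[OF yn] in \<open>auto intro: less_imp_le\<close>)
      then show ?thesis using f_ext True pq by simp
    next
      case False
      then have ay: "a y > 0" using anonneg by (metis order_le_less)
      show ?thesis
      proof (rule ccontr)
        assume "\<not> q \<le> f y"
        then have fy: "fr (- y) > - q" by (simp add: fr_def)
        have xy: "- x0 < - y" using y ay x0 by (cases "x0 = y") auto
        have ax: "ar (- x0) = 0" using x0 by (simp add: ar_def)
        have ay': "ar (- y) > 0" using ay by (simp add: ar_def)
        have der: "\<forall>z. - x0 \<le> z \<and> z \<le> - y \<and> 0 < ar z \<longrightarrow>
              (fr has_real_derivative fr' z) (at z) \<and> \<bar>fr z\<bar> \<le> B \<and> (- q < fr z \<longrightarrow> fr' z \<le> - c / ar z)"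
          proof (intro allI impI conjI)
            fix z assume z: "- x0 \<le> z \<and> z \<le> - y \<and> 0 < ar z"
            have "(f has_real_derivative f' (- z)) (at (- z))" using f_deriv z by (auto simp: ar_def)
            then have "((\<lambda>z. f (- z)) has_real_derivative - f' (- z)) (at z)" using DERIV_mirror by blast
            from DERIV_minus[OF this]
            show "(fr has_real_derivative fr' z) (at z)" by (simp add: fr_def fr'_def)
            show "\<bar>fr z\<bar> \<le> B" using fB by (simp add: fr_def)
            assume "- q < fr z"
            then have fz: "f (- z) < q" by (simp add: fr_def)
            have zn: "\<bar>- z - x0\<bar> < \<delta>" using z y by auto
            have "H (- z) q < max (H (- z) p0) (H (- z) (f (- z)))" using qc_gt[OF qc fz pq] .
            then have "H (- z) (f (- z)) > lam + c" using near[OF zn] c by (smt (verit))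
            moreover have "a (- z) * f' (- z) + H (- z) (f (- z)) = lam" using f_eq z by (auto simp: ar_def)
            ultimately have "f' (- z) * a (- z) \<le> - c" by (simp add: algebra_simps)
            then have "f' (- z) \<le> (- c) / a (- z)" using z by (subst pos_le_divide_eq) (auto simp: ar_def)
            then show "fr' z \<le> - c / ar z" by (simp add: fr'_def ar_def)
          qed
        show False using blowup[OF arc arn arq K ax xy ay' der c fy] .
      qed
    qed
    then show ?thesis using \<delta> by blast
  qed
  have visc: "visc_supersol a H lam u" unfolding visc_supersol_def
  proof (intro conjI allI impI)
    show "continuous_on UNIV u" using ucont by (simp add: u_def)
    fix \<phi> \<phi>' \<phi>'' x0
    assume asm: "C2_with \<phi> \<phi>' \<phi>'' \<and> \<phi> x0 = u x0 \<and> (\<exists>\<delta>>0. \<forall>y. \<bar>y - x0\<bar> < \<delta> \<longrightarrow> \<phi> y \<le> u y)"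
    then have d\<phi>: "\<And>x. (\<phi> has_real_derivative \<phi>' x) (at x)"
      and d\<phi>': "\<And>x. (\<phi>' has_real_derivative \<phi>'' x) (at x)"
      and eq: "\<phi> x0 = u x0" unfolding C2_with_def by auto
    obtain \<delta>0 where \<delta>0: "\<delta>0 > 0" "\<And>y. \<bar>y - x0\<bar> < \<delta>0 \<Longrightarrow> \<phi> y \<le> u y" using asm by blast
    show "a x0 * \<phi>'' x0 + H x0 (\<phi>' x0) \<le> lam"
    proof (cases "a x0 > 0")
      case True
      then have "x0 \<in> Ap" by (simp add: Ap_def)
      then obtain e where e: "e > 0" "ball x0 e \<subseteq> Ap" using openA open_contains_ball by blast
      define s0 where "s0 = x0 - e / 2"
      define t0 where "t0 = x0 + e / 2"
      have sub: "{s0..t0} \<subseteq> Ap"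
      proof
        fix x assume "x \<in> {s0..t0}"
        then have "x \<in> ball x0 e" using e(1) by (auto simp: s0_def t0_def dist_real_def)
        then show "x \<in> Ap" using e(2) by blast
      qed
      have du: "(u has_real_derivative f z) (at z)" if z: "z \<in> {s0<..<t0}" for z
      proof -
        have "((\<lambda>y. integral {s0..y} f) has_real_derivative f z) (at z within {s0..t0})"
          by (rule integral_has_real_derivative) (use continuous_on_subset[OF fcA sub] z in auto)
        moreover have "at z within {s0..t0} = at z" using z by (intro at_within_interior) simp
        ultimately have "((\<lambda>y. integral {s0..y} f) has_real_derivative f z) (at z)" by simp
        from DERIV_add[OF DERIV_const[of "u s0"] this]
        have d1: "((\<lambda>y. u s0 + integral {s0..y} f) has_real_derivative f z) (at z)" by simp
        have eqs: "u s0 + integral {s0..y} f = u y" if "y \<in> {s0<..<t0}" for y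
          using pdiff[of s0 y] that unfolding u_def by simp
        show ?thesis
          using has_field_derivative_transform_within_open[OF d1 open_greaterThanLessThan z eqs] .
      qed
      define \<psi> where "\<psi> = (\<lambda>y. u y - \<phi> y)"
      define \<psi>' where "\<psi>' = (\<lambda>y. f y - \<phi>' y)"
      have d\<psi>: "(\<psi> has_real_derivative \<psi>' z) (at z)" if "z \<in> {s0<..<t0}" for z
        unfolding \<psi>_def \<psi>'_def using DERIV_diff[OF du[OF that] d\<phi>] .
      have x0in: "x0 \<in> {s0<..<t0}" using e by (simp add: s0_def t0_def)
      have psi_nn: "\<psi> y \<ge> 0" if "\<bar>y - x0\<bar> < \<delta>0" for y using \<delta>0(2)[OF that] by (simp add: \<psi>_def)
      have psi0: "\<psi> x0 = 0" using eq by (simp add: \<psi>_def)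
      have lm: "\<forall>y. \<bar>x0 - y\<bar> < \<delta>0 \<longrightarrow> \<psi> x0 \<le> \<psi> y"
      proof (intro allI impI)
        fix y assume "\<bar>x0 - y\<bar> < \<delta>0"
        then have "\<bar>y - x0\<bar> < \<delta>0" by (metis abs_minus_commute)
        then show "\<psi> x0 \<le> \<psi> y" using psi_nn psi0 by simp
      qed
      have "\<psi>' x0 = 0" using DERIV_local_min[OF d\<psi>[OF x0in] \<delta>0(1) lm] .
      then have fphi: "\<phi>' x0 = f x0" by (simp add: \<psi>'_def)
      have "(f has_real_derivative f' x0) (at x0)" using f_deriv True by simp
      from DERIV_diff[OF this d\<phi>']
      have d\<psi>': "(\<psi>' has_real_derivative f' x0 - \<phi>'' x0) (at x0)" unfolding \<psi>'_def .
      have ineq: "\<phi>'' x0 \<le> f' x0"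
      proof (rule ccontr)
        assume "\<not> \<phi>'' x0 \<le> f' x0"
        then have "f' x0 - \<phi>'' x0 < 0" by simp
        from DERIV_neg_dec_right[OF d\<psi>' this] obtain d where d: "d > 0"
          "\<And>h. h > 0 \<Longrightarrow> h < d \<Longrightarrow> \<psi>' (x0 + h) < \<psi>' x0" by blast
        define h where "h = min d (min (e / 2) \<delta>0) / 2"
        have h: "h > 0" "h < d" "h < e / 2" "h < \<delta>0" using d e \<delta>0 by (auto simp: h_def)
        have dd: "(\<psi> has_real_derivative \<psi>' x) (at x)" if "x0 \<le> x" "x \<le> x0 + h" for x
        proof -
          have "x \<in> {s0<..<t0}" using that h e by (simp add: s0_def t0_def)
          then show ?thesis by (rule d\<psi>)
        qed
        have hx: "x0 < x0 + h" using h by simp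
        from MVT2[OF hx dd] obtain \<xi> where \<xi>: "x0 < \<xi>" "\<xi> < x0 + h"
          "\<psi> (x0 + h) - \<psi> x0 = (x0 + h - x0) * \<psi>' \<xi>" by blast
        have "\<xi> - x0 > 0" "\<xi> - x0 < d" using \<xi> h by simp_all
        from d(2)[OF this] have "\<psi>' \<xi> < 0" using \<open>\<psi>' x0 = 0\<close> by simp
        then have "\<psi> (x0 + h) < 0" using \<xi>(3) psi0 h(1) by (simp add: mult_pos_neg)
        moreover have "\<psi> (x0 + h) \<ge> 0" using psi_nn h by simp
        ultimately show False by simp
      qed
      have "a x0 * \<phi>'' x0 \<le> a x0 * f' x0" using ineq True by (simp add: mult_left_mono)
      moreover have "a x0 * f' x0 + H x0 (f x0) = lam" using f_eq True by simp
      ultimately show ?thesis using fphi by simp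
    next
      case False
      then have ax0: "a x0 = 0" using anonneg by (metis order_le_less)
      define P where "P = \<phi>' x0"
      show ?thesis
      proof (rule ccontr)
        assume "\<not> ?thesis"
        then have HP: "H x0 P > lam" using ax0 by (simp add: P_def)
        obtain p0 where p0: "H x0 p0 < lam" using exlt ax0 by (auto simp: Z_def)
        have "H x0 P - lam > 0" using HP by simp
        from Hp_cont[OF H_class g1 this, where x=x0 and P=P] obtain \<theta> where \<theta>: "\<theta> > 0"
          "\<And>q. \<bar>q - P\<bar> < \<theta> \<Longrightarrow> \<bar>H x0 q - H x0 P\<bar> < H x0 P - lam" by blast
        have Hqq: "H x0 q > lam" if "\<bar>q - P\<bar> < \<theta>" for q using \<theta>(2)[OF that] by linarith
        have "P \<noteq> p0" using HP p0 by auto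
        then consider "p0 < P" | "P < p0" by linarith
        then show False
        proof cases
          case 1
          define mm where "mm = min (\<theta> / 2) ((P - p0) / 2)"
          have m1: "mm > 0" using 1 \<theta> by (simp add: mm_def)
          have m2: "mm \<le> (P - p0) / 2" unfolding mm_def by (rule min.cobounded2)
          have m3: "mm \<le> \<theta> / 2" unfolding mm_def by (rule min.cobounded1)
          define q where "q = P - mm"
          have "2 * mm \<le> P - p0" using m2 by simp
          then have pq: "p0 < q" using m1 1 unfolding q_def by linarith
          have qP: "q < P" using m1 by (simp add: q_def)
          have Hq: "H x0 q > lam" using m1 m3 \<theta>(1) by (intro Hqq) (simp add: q_def)
          obtain \<delta> where \<delta>: "\<delta> > 0" "\<And>y. x0 \<le> y \<Longrightarrow> y < x0 + \<delta> \<Longrightarrow> f y \<le> q"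
            using upper[OF ax0 p0 pq Hq] by blast
          have uup: "u y \<le> u x0 + q * (y - x0)" if y: "x0 \<le> y" "y < x0 + \<delta>" for y
          proof -
            have "integral {x0..y} f \<le> integral {x0..y} (\<lambda>_. q)"
              using intg \<delta>(2) y by (intro integral_le) auto
            then show ?thesis using pdiff[OF y(1)] y(1) by (simp add: u_def mult.commute)
          qed
          define chi where "chi = (\<lambda>y. \<phi> y - q * y)"
          have "(chi has_real_derivative P - q) (at x0)"
            unfolding chi_def P_def by (auto intro!: derivative_eq_intros d\<phi>)
          from DERIV_pos_inc_right[OF this] qP obtain d where d: "d > 0"
            "\<And>h. h > 0 \<Longrightarrow> h < d \<Longrightarrow> chi x0 < chi (x0 + h)" by auto
          define h where "h = min d (min \<delta> \<delta>0) / 2"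
          have h: "h > 0" "h < d" "h < \<delta>" "h < \<delta>0" using d \<delta> \<delta>0 by (auto simp: h_def)
          have "\<phi> (x0 + h) \<le> u (x0 + h)" using \<delta>0(2)[of "x0 + h"] h by simp
          also have "\<dots> \<le> u x0 + q * h" using uup[of "x0 + h"] h by simp
          finally have "chi (x0 + h) \<le> chi x0" using eq by (simp add: chi_def algebra_simps)
          then show False using d(2)[OF h(1,2)] by simp
        next
          case 2
          define mm where "mm = min (\<theta> / 2) ((p0 - P) / 2)"
          have m1: "mm > 0" using 2 \<theta> by (simp add: mm_def)
          have m2: "mm \<le> (p0 - P) / 2" unfolding mm_def by (rule min.cobounded2)
          have m3: "mm \<le> \<theta> / 2" unfolding mm_def by (rule min.cobounded1)
          define q where "q = P + mm"
          have "2 * mm \<le> p0 - P" using m2 by simp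
          then have pq: "q < p0" using m1 2 unfolding q_def by linarith
          have qP: "P < q" using m1 by (simp add: q_def)
          have Hq: "H x0 q > lam" using m1 m3 \<theta>(1) by (intro Hqq) (simp add: q_def)
          obtain \<delta> where \<delta>: "\<delta> > 0" "\<And>y. x0 - \<delta> < y \<Longrightarrow> y \<le> x0 \<Longrightarrow> q \<le> f y"
            using lower[OF ax0 p0 pq Hq] by blast
          have ulo: "u x0 - q * (x0 - y) \<ge> u y" if y: "x0 - \<delta> < y" "y \<le> x0" for y
          proof -
            have "integral {y..x0} (\<lambda>_. q) \<le> integral {y..x0} f"
              using intg \<delta>(2) y by (intro integral_le) auto
            then show ?thesis using pdiff[OF y(2)] y(2) by (simp add: u_def mult.commute)
          qed
          define chi where "chi = (\<lambda>y. \<phi> y - q * y)"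
          have "(chi has_real_derivative P - q) (at x0)"
            unfolding chi_def P_def by (auto intro!: derivative_eq_intros d\<phi>)
          from DERIV_neg_dec_left[OF this] qP obtain d where d: "d > 0"
            "\<And>h. h > 0 \<Longrightarrow> h < d \<Longrightarrow> chi x0 < chi (x0 - h)" by auto
          define h where "h = min d (min \<delta> \<delta>0) / 2"
          have h: "h > 0" "h < d" "h < \<delta>" "h < \<delta>0" using d \<delta> \<delta>0 by (auto simp: h_def)
          have "\<phi> (x0 - h) \<le> u (x0 - h)" using \<delta>0(2)[of "x0 - h"] h by simp
          also have "\<dots> \<le> u x0 - q * h" using ulo[of "x0 - h"] h by simp
          finally have "chi (x0 - h) \<le> chi x0" using eq by (simp add: chi_def algebra_simps)
          then show False using d(2)[OF h(1,2)] by simp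
        qed
      qed
    qed
  qed
  show ?thesis using lip visc unfolding u_def by blast
qed

end
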